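(* Assume $S\times M\neq\emptyset$, let $(x,\lambda):[t_0,+\infty[\ \to X\times Y$ be a solution of (AHT), and suppose there exists $t_+\ge t_0$ such that $\varepsilon^2(t)+\dot\varepsilon(t)\ge0$ and $2\varepsilon(t)\dot\varepsilon(t)+\ddot\varepsilon(t)\le0$ for all $t\ge t_+$. Then for every $(\bar x,\bar\lambda)\in S\times M$, as $t\to+\infty$: \[ \|(\dot x(t),\dot\lambda(t))+\varepsilon(t)((x(t),\lambda(t))-(\bar x,\bar\lambda))\|^2=\mathcal{O}\big(e^{-2\rho(t)}+\varepsilon^2(t)\big), \] \[ \varepsilon(t)\big(L(x(t),\bar\lambda)-L(\bar x,\lambda(t))\big)=\mathcal{O}\big(e^{-2\rho(t)}+\varepsilon^2(t)\big),\qquad \|T(x(t),\lambda(t))-T(\bar x,\bar\lambda)\|^2=\mathcal{O}\big(e^{-2\rho(t)}+\varepsilon^2(t)\big). \]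
   Context: $X,Y$ are real Hilbert spaces; $X\times Y$ carries the product inner product and norm $\|\cdot\|$. Standing assumptions: $f:X\to\mathbb{R}$ is convex and continuously differentiable with $\nabla f$ Lipschitz continuous on bounded subsets of $X$; $A:X\to Y$ is linear and continuous with adjoint $A^*$; $b\in Y$; $\varepsilon:[t_0,+\infty[\ \to\ ]0,+\infty[$ ($t_0\ge0$) is twice continuously differentiable with $\lim_{t\to+\infty}\varepsilon(t)=0$. $L(x,\lambda)=f(x)+\langle\lambda,Ax-b\rangle_Y$ and $T(x,\lambda)=(\nabla f(x)+A^*\lambda,\ b-Ax)$. $S$ is the set of optimal solutions of $\min\{f(x):Ax=b\}$, $M$ the set of Lagrange multipliers; $S\times M$ is the set of saddle points of $L$, equal to the zero set of $T$. $\rho(t)=\int_{t_0}^t\varepsilon(\tau)\,d\tau$. (AHT) is the system $\dot x+\nabla f(x)+A^*\lambda+\varepsilon(t)x=0$, $\dot\lambda+b-Ax+\varepsilon(t)\lambda=0$; a solution is a continuously differentiable $(x,\lambda):[t_0,+\infty[\ \to X\times Y$ satisfying it on $[t_0,+\infty[$ (existence and uniqueness for every initial datum is assumed). *)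

theory Defs
  imports "HOL-Analysis.Analysis" "HOL-Library.Landau_Symbols"
begin

definition Lag :: "('a::real_inner \<Rightarrow> real) \<Rightarrow> ('a \<Rightarrow> 'b::real_inner) \<Rightarrow> 'b \<Rightarrow> 'a \<Rightarrow> 'b \<Rightarrow> real" where
  "Lag f A b x l = f x + inner l (A x - b)"

definition Top :: "('a::real_inner \<Rightarrow> 'a) \<Rightarrow> ('a \<Rightarrow> 'b::real_inner) \<Rightarrow> ('b \<Rightarrow> 'a) \<Rightarrow> 'b \<Rightarrow> 'a \<Rightarrow> 'b \<Rightarrow> 'a \<times> 'b" where
  "Top gradf A Astar b x l = (gradf x + Astar l, b - A x)"

definition optsol :: "('a \<Rightarrow> real) \<Rightarrow> ('a \<Rightarrow> 'b) \<Rightarrow> 'b \<Rightarrow> 'a set" where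
  "optsol f A b = {x. A x = b \<and> (\<forall>y. A y = b \<longrightarrow> f x \<le> f y)}"

definition lagmult :: "('a \<Rightarrow> real) \<Rightarrow> ('a \<Rightarrow> 'a) \<Rightarrow> ('a \<Rightarrow> 'b) \<Rightarrow> ('b \<Rightarrow> 'a::real_vector) \<Rightarrow> 'b \<Rightarrow> 'b set" where
  "lagmult f gradf A Astar b = {l. \<exists>xs\<in>optsol f A b. gradf xs + Astar l = 0}"

end

theory Submission
  imports Defs
begin

lemma rq_lim:
  fixes f :: "real \<Rightarrow> 'c::real_normed_vector"
  assumes "(f has_vector_derivative f') (at_right t)"
  shows "((\<lambda>h. (f (t+h) - f t) /\<^sub>R h) \<longlongrightarrow> f') (at_right 0)"
proof -
  have "((\<lambda>y. (1 / norm (y - t)) *\<^sub>R (f y - (f t + (y - t) *\<^sub>R f'))) \<longlongrightarrow> 0) (at_right t)"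
    using assms unfolding has_vector_derivative_def has_derivative_within by (rule conjunct2)
  from this[unfolded filterlim_at_right_to_0[of _ _ t]]
  have "((\<lambda>h. (1 / norm (h + t - t)) *\<^sub>R (f (h+t) - (f t + (h + t - t) *\<^sub>R f'))) \<longlongrightarrow> 0) (at_right 0)" .
  then have "((\<lambda>h. (1 / norm (h + t - t)) *\<^sub>R (f (h+t) - (f t + (h + t - t) *\<^sub>R f')) + f') \<longlongrightarrow> 0 + f') (at_right 0)"
    by (intro tendsto_add tendsto_const)
  moreover have "eventually (\<lambda>h. (1 / norm (h + t - t)) *\<^sub>R (f (h+t) - (f t + (h + t - t) *\<^sub>R f')) + f' = (f (t+h) - f t) /\<^sub>R h) (at_right 0)"
    using eventually_at_right_less[of 0]
  proof (rule eventually_mono)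
    fix h :: real assume "0 < h"
    then show "(1 / norm (h + t - t)) *\<^sub>R (f (h+t) - (f t + (h + t - t) *\<^sub>R f')) + f' = (f (t+h) - f t) /\<^sub>R h"
      by (simp add: algebra_simps scaleR_diff_right inverse_eq_divide)
  qed
  ultimately show ?thesis using tendsto_cong by force
qed
lemma ev_small: "(e::real) > 0 \<Longrightarrow> eventually (\<lambda>h. h < e) (at_right 0)"
  unfolding eventually_at_right_field by (intro exI[of _ e]) auto

lemma dini_mono:
  fixes \<Phi> :: "real \<Rightarrow> real"
  assumes ab: "a \<le> b" and cont: "continuous_on {a..b} \<Phi>"
    and D: "\<And>t d. t \<in> {a..<b} \<Longrightarrow> d > 0 \<Longrightarrow> eventually (\<lambda>h. \<Phi> (t+h) \<le> \<Phi> t + d * h) (at_right 0)"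
  shows "\<Phi> b \<le> \<Phi> a"
proof -
  have key: "\<Phi> b \<le> \<Phi> a + d * (b - a)" if d: "d > 0" for d
  proof -
    define S where "S = {s \<in> {a..b}. \<Phi> s \<le> \<Phi> a + d * (s - a)}"
    have clS: "closed S" unfolding S_def
      by (intro continuous_on_closed_Collect_le cont continuous_intros closed_atLeastAtMost)
    have aS: "a \<in> S" using ab by (simp add: S_def)
    have bdd: "bdd_above S" unfolding S_def by (auto intro: bdd_aboveI[of _ b])
    define c where "c = Sup S"
    have cS: "c \<in> S" unfolding c_def using clS aS bdd closed_contains_Sup by blast
    have "c = b"
    proof (rule ccontr)
      assume "c \<noteq> b"
      with cS have cb: "c < b" "a \<le> c" by (auto simp: S_def)
      have ev1: "eventually (\<lambda>h. \<Phi> (c+h) \<le> \<Phi> c + d * h) (at_right 0)"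
        using D[of c d] cb d by simp
      have ev2: "eventually (\<lambda>h::real. h < b - c) (at_right 0)"
        using cb by (intro ev_small) simp
      have ev3: "eventually (\<lambda>h::real. h > 0) (at_right 0)"
        by (rule eventually_at_right_less)
      have "eventually (\<lambda>h. \<Phi> (c+h) \<le> \<Phi> c + d * h \<and> h < b - c \<and> h > 0) (at_right 0)"
        using ev1 ev2 ev3 by (intro eventually_conj)
      from eventually_happens'[OF _ this]
      obtain h where h: "h > 0" "\<Phi> (c+h) \<le> \<Phi> c + d * h" "h < b - c"
        by (auto simp: trivial_limit_at_right_real)
      then have "c + h \<in> S" using cS cb unfolding S_def by (auto simp: algebra_simps)
      then have "c + h \<le> c" unfolding c_def using bdd by (rule cSup_upper)
      with h show False by simp
    qed
    with cS show ?thesis by (simp add: S_def)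
  qed
  show ?thesis
  proof (rule field_le_epsilon)
    fix e :: real assume e: "e > 0"
    show "\<Phi> b \<le> \<Phi> a + e"
    proof (cases "a = b")
      case True then show ?thesis using e by simp
    next
      case False
      then have "b - a > 0" using ab by simp
      then show ?thesis using key[of "e / (b - a)"] e by simp
    qed
  qed
qed


lemma dini_from_G:
  fixes \<Phi> G :: "real \<Rightarrow> real"
  assumes G: "(G \<longlongrightarrow> G0) (at_right 0)" and G0: "G0 \<le> 0"
    and ev: "eventually (\<lambda>h. \<Phi> (t+h) - \<Phi> t \<le> h * G h) (at_right 0)" and d: "d > 0"
  shows "eventually (\<lambda>h. \<Phi> (t+h) \<le> \<Phi> t + d * h) (at_right 0)"
proof -
  have "eventually (\<lambda>h. G h < d) (at_right 0)"
    using order_tendstoD(2)[OF G] G0 d by simp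
  with ev eventually_at_right_less[of "0::real"]
  show ?thesis
  proof (eventually_elim)
    case (elim h)
    then have "h * G h \<le> h * d" by (intro mult_left_mono) auto
    then have "h * G h \<le> d * h" by (simp add: mult.commute)
    moreover have "\<Phi> (t+h) = \<Phi> (h+t)" by (simp add: add.commute)
    ultimately show ?case using elim by linarith
  qed
qed

lemma dini_from_deriv:
  fixes \<Phi> :: "real \<Rightarrow> real"
  assumes "(\<Phi> has_real_derivative D) (at_right t)" "D \<le> 0" "d > 0"
  shows "eventually (\<lambda>h. \<Phi> (t+h) \<le> \<Phi> t + d * h) (at_right 0)"
proof (rule dini_from_G[of "\<lambda>h. (\<Phi> (t+h) - \<Phi> t) /\<^sub>R h" D])
  show "((\<lambda>h. (\<Phi> (t+h) - \<Phi> t) /\<^sub>R h) \<longlongrightarrow> D) (at_right 0)"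
    using assms(1) by (intro rq_lim) (simp add: has_real_derivative_iff_has_vector_derivative)
  show "eventually (\<lambda>h. \<Phi> (t+h) - \<Phi> t \<le> h * ((\<Phi> (t+h) - \<Phi> t) /\<^sub>R h)) (at_right 0)"
    using eventually_at_right_less[of "0::real"] by eventually_elim (auto simp: field_simps)
qed (use assms in auto)

lemma grad_ineq:
  fixes f :: "'a::real_inner \<Rightarrow> real"
  assumes cvx: "convex_on UNIV f"
    and gr: "(f has_derivative (\<lambda>h. inner g h)) (at u)"
  shows "f u + inner g (v - u) \<le> f v"
proof -
  define \<phi> where "\<phi> s = f (u + s *\<^sub>R (v - u))" for s :: real
  have "((\<lambda>s. u + s *\<^sub>R (v - u)) has_derivative (\<lambda>s. s *\<^sub>R (v - u))) (at 0)"
    by (auto intro!: derivative_eq_intros)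
  moreover have "(f has_derivative (\<lambda>h. inner g h)) (at (u + 0 *\<^sub>R (v - u)))"
    using gr by simp
  ultimately have "((f \<circ> (\<lambda>s. u + s *\<^sub>R (v - u))) has_derivative ((\<lambda>h. inner g h) \<circ> (\<lambda>s. s *\<^sub>R (v - u)))) (at 0)"
    by (rule diff_chain_at)
  then have "(\<phi> has_derivative (\<lambda>s. inner g (s *\<^sub>R (v - u)))) (at 0)"
    unfolding \<phi>_def by (simp add: o_def)
  then have "(\<phi> has_real_derivative inner g (v - u)) (at 0)"
    unfolding has_field_derivative_def by (rule has_derivative_eq_rhs) (auto simp: fun_eq_iff)
  then have "((\<lambda>s. (\<phi> s - \<phi> 0) / (s - 0)) \<longlongrightarrow> inner g (v - u)) (at 0)"
    by (simp add: has_field_derivative_iff)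
  then have lim: "((\<lambda>s. (\<phi> s - \<phi> 0) / (s - 0)) \<longlongrightarrow> inner g (v - u)) (at_right 0)"
    by (rule tendsto_within_subset) simp
  have "eventually (\<lambda>s. (\<phi> s - \<phi> 0) / (s - 0) \<le> f v - f u) (at_right 0)"
    using eventually_at_right_less[of "0::real"] ev_small[OF zero_less_one]
  proof eventually_elim
    case (elim s)
    have "\<phi> s = f ((1 - s) *\<^sub>R u + s *\<^sub>R v)"
      unfolding \<phi>_def by (simp add: algebra_simps)
    also have "\<dots> \<le> (1 - s) * f u + s * f v"
      using elim by (intro convex_onD[OF cvx]) auto
    finally have "\<phi> s - \<phi> 0 \<le> s * (f v - f u)" unfolding \<phi>_def by (simp add: algebra_simps)
    then show ?case using elim by (simp add: divide_simps mult.commute)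
  qed
  from tendsto_upperbound[OF lim this] have "inner g (v - u) \<le> f v - f u"
    by (simp add: trivial_limit_at_right_real)
  then show ?thesis by simp
qed

lemma inner_self_deriv:
  assumes "(z has_vector_derivative w) (at t within S)"
  shows "((\<lambda>s. inner (z s) (z s)) has_real_derivative 2 * inner (z t) w) (at t within S)"
proof -
  have "((\<lambda>s. inner (z s) (z s)) has_vector_derivative (inner (z t) w + inner w (z t))) (at t within S)"
    by (rule bounded_bilinear.has_vector_derivative[OF bounded_bilinear_inner assms assms])
  then show ?thesis
    by (simp add: has_real_derivative_iff_has_vector_derivative inner_commute)
qed


locale aht =
  fixes f :: "'a::{real_inner,complete_space} \<Rightarrow> real"
    and gradf :: "'a \<Rightarrow> 'a"
    and A :: "'a \<Rightarrow> 'b::{real_inner,complete_space}"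
    and Astar :: "'b \<Rightarrow> 'a"
    and b :: 'b
    and t0 tp :: real
    and eps eps' eps'' :: "real \<Rightarrow> real"
    and x x' :: "real \<Rightarrow> 'a"
    and lam lam' :: "real \<Rightarrow> 'b"
    and xb :: 'a and lb :: 'b
  assumes f_convex: "convex_on UNIV f"
    and f_grad: "\<And>u. (f has_derivative (\<lambda>h. inner (gradf u) h)) (at u)"
    and gradf_lip: "\<And>B. bounded B \<Longrightarrow> \<exists>K. \<forall>u\<in>B. \<forall>v\<in>B. norm (gradf u - gradf v) \<le> K * norm (u - v)"
    and A_lin: "bounded_linear A"
    and A_adj: "\<And>u v. inner (A u) v = inner u (Astar v)"
    and eps_pos: "\<And>t. t \<ge> t0 \<Longrightarrow> eps t > 0"
    and eps_d1: "\<And>t. t \<ge> t0 \<Longrightarrow> (eps has_real_derivative eps' t) (at t within {t0..})"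
    and eps_d2: "\<And>t. t \<ge> t0 \<Longrightarrow> (eps' has_real_derivative eps'' t) (at t within {t0..})"
    and x_deriv: "\<And>t. t \<ge> t0 \<Longrightarrow> (x has_vector_derivative x' t) (at t within {t0..})"
    and lam_deriv: "\<And>t. t \<ge> t0 \<Longrightarrow> (lam has_vector_derivative lam' t) (at t within {t0..})"
    and x'_cont: "continuous_on {t0..} x'"
    and lam'_cont: "continuous_on {t0..} lam'"
    and ode_x: "\<And>t. t \<ge> t0 \<Longrightarrow> x' t + gradf (x t) + Astar (lam t) + eps t *\<^sub>R x t = 0"
    and ode_lam: "\<And>t. t \<ge> t0 \<Longrightarrow> lam' t + (b - A (x t)) + eps t *\<^sub>R lam t = 0"
    and tp_ge: "tp \<ge> t0"
    and cond1: "\<And>t. t \<ge> tp \<Longrightarrow> (eps t)\<^sup>2 + eps' t \<ge> 0"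
    and cond2: "\<And>t. t \<ge> tp \<Longrightarrow> 2 * eps t * eps' t + eps'' t \<le> 0"
    and xb_lb: "(xb, lb) \<in> optsol f A b \<times> lagmult f gradf A Astar b"
begin

definition "z t = (x t, lam t)"
definition "w t = (x' t, lam' t)"
definition "zb = (xb, lb)"
definition "TT p = Top gradf A Astar b (fst p) (snd p)"
definition "rho t = integral {t0..t} eps"
definition "E t = exp (2 * rho t)"

lemma A_diff: "A u - A v = A (u - v)"
  using A_lin by (simp add: linear_diff bounded_linear.linear)

lemma Astar_diff: "Astar u - Astar v = Astar (u - v)"
proof -
  define d where "d = Astar (u - v) - (Astar u - Astar v)"
  have "inner y d = 0" for y
    unfolding d_def by (simp add: inner_diff_right A_adj[symmetric])
  from this[of d] show ?thesis unfolding d_def by simp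
qed

lemma Astar_bound: "\<exists>K\<ge>0. \<forall>v. norm (Astar v) \<le> K * norm v"
proof -
  obtain K where K: "K > 0" "\<And>u. norm (A u) \<le> norm u * K"
    using bounded_linear.pos_bounded[OF A_lin] by blast
  have "norm (Astar v) \<le> K * norm v" for v
  proof (cases "Astar v = 0")
    case False
    have "(norm (Astar v))\<^sup>2 = inner (A (Astar v)) v"
      by (simp add: A_adj power2_norm_eq_inner)
    also have "\<dots> \<le> norm (A (Astar v)) * norm v" by (rule Cauchy_Schwarz_ineq2[THEN order_trans[OF abs_ge_self]])
    also have "\<dots> \<le> norm (Astar v) * K * norm v" using K(2) by (simp add: mult_right_mono)
    finally have "norm (Astar v) * norm (Astar v) \<le> norm (Astar v) * (K * norm v)"
      by (simp add: power2_eq_square mult.assoc)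
    then show ?thesis using False by simp
  qed (use K in auto)
  then show ?thesis using K by (intro exI[of _ K]) auto
qed

lemma gradf_mono: "inner (gradf u - gradf v) (u - v) \<ge> 0"
proof -
  have "f u + inner (gradf u) (v - u) \<le> f v" by (rule grad_ineq[OF f_convex f_grad])
  moreover have "f v + inner (gradf v) (u - v) \<le> f u" by (rule grad_ineq[OF f_convex f_grad])
  ultimately show ?thesis by (simp add: inner_diff_left inner_diff_right)
qed

lemma TT_mono: "inner (TT p - TT q) (p - q) \<ge> 0"
proof -
  obtain x1 l1 x2 l2 where pq: "p = (x1, l1)" "q = (x2, l2)" by (cases p, cases q) auto
  have "inner (TT p - TT q) (p - q) = inner (gradf x1 - gradf x2) (x1 - x2)
      + inner (Astar l1 - Astar l2) (x1 - x2) + inner (A x2 - A x1) (l1 - l2)"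
    unfolding pq TT_def Top_def by (simp add: algebra_simps inner_diff_left inner_diff_right inner_add_left)
  also have "inner (Astar l1 - Astar l2) (x1 - x2) = inner (A (x1 - x2)) (l1 - l2)"
    by (metis A_adj Astar_diff inner_commute)
  also have "inner (A x2 - A x1) (l1 - l2) = - inner (A (x1 - x2)) (l1 - l2)"
    by (simp add: A_diff[symmetric] inner_diff_left)
  finally show ?thesis using gradf_mono[of x1 x2] by simp
qed

lemma xb_opt: "A xb = b" and lb_mult: "gradf xb + Astar lb = 0"
proof -
  from xb_lb have xbS: "xb \<in> optsol f A b" and "lb \<in> lagmult f gradf A Astar b" by auto
  then obtain xs where xs: "xs \<in> optsol f A b" "gradf xs + Astar lb = 0"
    unfolding lagmult_def by blast
  show Axb: "A xb = b" using xbS unfolding optsol_def by simp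
  define g where "g u = f u + inner lb (A u - b)" for u
  have gd: "(g has_derivative (\<lambda>h. inner (gradf u + Astar lb) h)) (at u)" for u
  proof -
    have "((\<lambda>u. inner lb (A u - b)) has_derivative (\<lambda>h. inner lb (A h))) (at u)"
    proof -
      have bl: "bounded_linear (\<lambda>u. inner lb (A u))"
        by (rule bounded_linear_compose[OF bounded_linear_inner_right A_lin])
      have "((\<lambda>u. inner lb (A u) - inner lb b) has_derivative (\<lambda>h. inner lb (A h) - 0)) (at u)"
        by (intro has_derivative_diff bounded_linear_imp_has_derivative[OF bl] has_derivative_const)
      then show ?thesis by (simp add: inner_diff_right)
    qed
    then have "(g has_derivative (\<lambda>h. inner (gradf u) h + inner lb (A h))) (at u)"
      unfolding g_def by (intro has_derivative_add f_grad)
    moreover have "\<And>h. inner lb (A h) = inner h (Astar lb)" by (metis A_adj inner_commute)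
    ultimately show ?thesis by (simp add: inner_add_right inner_commute)
  qed
  have gcvx: "convex_on UNIV g"
  proof -
    have "convex_on UNIV (\<lambda>u. inner lb (A u - b))"
    proof (rule convex_onI)
      fix t :: real and u v :: 'a assume "0 < t" "t < 1"
      have e1: "A ((1 - t) *\<^sub>R u + t *\<^sub>R v) = (1 - t) *\<^sub>R A u + t *\<^sub>R A v"
        using A_lin by (simp add: linear_add linear_scale bounded_linear.linear)
      have "A ((1 - t) *\<^sub>R u + t *\<^sub>R v) - b = ((1 - t) *\<^sub>R A u + t *\<^sub>R A v) - b"
        by (simp only: e1)
      also have "\<dots> = (1 - t) *\<^sub>R (A u - b) + t *\<^sub>R (A v - b)" by (simp add: algebra_simps)
      finally show "inner lb (A ((1 - t) *\<^sub>R u + t *\<^sub>R v) - b) \<le> (1 - t) * inner lb (A u - b) + t * inner lb (A v - b)"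
        by (simp add: inner_add_right)
    qed simp
    then show ?thesis unfolding g_def by (intro convex_on_add f_convex)
  qed
  have gmin: "g xs \<le> g u" for u
    using grad_ineq[OF gcvx gd[of xs], of u] xs(2) by simp
  have Axs: "A xs = b" using xs(1) unfolding optsol_def by simp
  have "f xb \<le> f xs" "f xs \<le> f xb" using xs(1) xbS Axs Axb unfolding optsol_def by auto
  then have "g xb = g xs" unfolding g_def using Axs Axb by simp
  then have "eventually (\<lambda>u. g xb \<le> g u) (at xb)" using gmin by simp
  from has_derivative_local_min[OF gd this]
  have "(\<lambda>h. inner (gradf xb + Astar lb) h) = (\<lambda>h. 0)" .
  from fun_cong[OF this, of "gradf xb + Astar lb"] show "gradf xb + Astar lb = 0" by simp
qed


lemma TT_zb: "TT zb = 0"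
  using xb_opt lb_mult unfolding TT_def zb_def Top_def by (simp add: zero_prod_def)

lemma ode: "t \<ge> t0 \<Longrightarrow> w t = - TT (z t) - eps t *\<^sub>R z t"
  using ode_x[of t] ode_lam[of t] unfolding w_def z_def TT_def Top_def
  by (simp add: algebra_simps eq_neg_iff_add_eq_0)


lemma to_right: "(g has_vector_derivative g') (at t within {t0..}) \<Longrightarrow> t0 \<le> t \<Longrightarrow> (g has_vector_derivative g') (at_right t)"
  by (rule has_vector_derivative_within_subset) auto

lemma to_right_real: "(g has_real_derivative g') (at t within {t0..}) \<Longrightarrow> t0 \<le> t \<Longrightarrow> (g has_real_derivative g') (at_right t)"
  by (rule DERIV_subset) auto

lemma z_deriv: "t \<ge> t0 \<Longrightarrow> (z has_vector_derivative w t) (at t within {t0..})"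
  unfolding z_def[abs_def] w_def by (intro has_vector_derivative_Pair x_deriv lam_deriv)

lemma z_cont: "continuous_on {t0..} z"
  using z_deriv has_vector_derivative_continuous continuous_on_eq_continuous_within by fastforce

lemma w_cont: "continuous_on {t0..} w"
  unfolding w_def[abs_def] by (intro continuous_on_Pair x'_cont lam'_cont)

lemma eps_cont: "continuous_on {t0..} eps"
  using eps_d1 DERIV_continuous continuous_on_eq_continuous_within by fastforce

lemma eps'_cont: "continuous_on {t0..} eps'"
  using eps_d2 DERIV_continuous continuous_on_eq_continuous_within by fastforce

lemma rho_deriv: "t \<ge> t0 \<Longrightarrow> (rho has_real_derivative eps t) (at_right t)"
proof -
  assume t: "t \<ge> t0"
  have "continuous_on {t0..t+1} eps" using eps_cont by (rule continuous_on_subset) auto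
  from integral_has_real_derivative[OF this, of t] t
  have "(rho has_real_derivative eps t) (at t within {t0..t+1})" unfolding rho_def[abs_def] by simp
  then have "(rho has_real_derivative eps t) (at t within {t..t+1})"
    by (rule DERIV_subset) (use t in auto)
  then show ?thesis by (simp add: at_within_Icc_at_right)
qed

lemma rho_cont: "continuous_on {t0..T} rho"
proof -
  have "continuous_on {t0..T} eps" using eps_cont by (rule continuous_on_subset) auto
  then have "eps integrable_on {t0..T}" by (rule integrable_continuous_real)
  then show ?thesis unfolding rho_def[abs_def] by (rule indefinite_integral_continuous_1)
qed

lemma rho_nonneg: "t \<ge> t0 \<Longrightarrow> rho t \<ge> 0"
proof -
  assume t: "t \<ge> t0"
  have "continuous_on {t0..t} eps" using eps_cont by (rule continuous_on_subset) auto
  then have "eps integrable_on {t0..t}" by (rule integrable_continuous_real)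
  then show ?thesis unfolding rho_def
    by (rule integral_nonneg) (use eps_pos in \<open>auto intro: less_imp_le\<close>)
qed

lemma rho_t0: "rho t0 = 0"
  unfolding rho_def by simp

lemma E_deriv: "t \<ge> t0 \<Longrightarrow> (E has_real_derivative 2 * eps t * E t) (at_right t)"
  unfolding E_def[abs_def]
  by (auto intro!: derivative_eq_intros rho_deriv simp: algebra_simps)

lemma E_pos: "E t > 0" unfolding E_def by simp

lemma E_cont: "continuous_on {t0..T} E"
  unfolding E_def[abs_def] by (intro continuous_intros rho_cont)

lemma z_bounded: "\<exists>R. \<forall>t\<ge>t0. norm (z t - zb) \<le> R"
proof -
  define r where "r s = inner (z s - zb) (z s - zb)" for s
  define c where "c = inner zb zb"
  define \<Psi> where "\<Psi> s = exp (rho s) * (r s - c)" for s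
  have rd: "(r has_real_derivative 2 * inner (z s - zb) (w s)) (at_right s)" if "s \<ge> t0" for s
  proof -
    have "((\<lambda>s. z s - zb) has_vector_derivative w s - 0) (at_right s)"
      by (intro derivative_intros to_right[OF z_deriv] that order_refl)
    then show ?thesis unfolding r_def[abs_def] using inner_self_deriv by fastforce
  qed
  have \<Psi>d: "(\<Psi> has_real_derivative exp (rho s) * eps s * (r s - c) + exp (rho s) * (2 * inner (z s - zb) (w s))) (at_right s)"
    if "s \<ge> t0" for s
    unfolding \<Psi>_def[abs_def]
    by (rule derivative_eq_intros rd rho_deriv that refl)+ (simp add: algebra_simps)
  have \<Psi>neg: "exp (rho s) * eps s * (r s - c) + exp (rho s) * (2 * inner (z s - zb) (w s)) \<le> 0"
    if s: "s \<ge> t0" for s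
  proof -
    have m: "inner (TT (z s) - TT zb) (z s - zb) \<ge> 0" by (rule TT_mono)
    have e1: "inner (z s - zb) (w s) = - inner (TT (z s) - TT zb) (z s - zb) - eps s * inner (z s - zb) (z s)"
      using ode[OF s] TT_zb by (simp add: inner_diff_right inner_commute right_diff_distrib)
    have e2: "inner (z s - zb) (z s) = r s + inner (z s - zb) zb"
      unfolding r_def by (simp add: inner_diff_right inner_diff_left inner_commute)
    have "0 \<le> inner ((z s - zb) + zb) ((z s - zb) + zb)" by simp
    then have "- c - r s \<le> 2 * inner (z s - zb) zb"
      unfolding r_def c_def by (simp only: inner_add_left inner_add_right inner_commute[of zb "z s - zb"])
    then have p: "0 \<le> eps s * (r s + c + 2 * inner (z s - zb) zb)"
      using eps_pos[OF s] by (intro mult_nonneg_nonneg) auto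
    have "eps s * (r s - c) + 2 * inner (z s - zb) (w s) = - (eps s * (r s + c + 2 * inner (z s - zb) zb)) - 2 * inner (TT (z s) - TT zb) (z s - zb)"
      unfolding e1 e2 by (simp add: algebra_simps)
    then have "eps s * (r s - c) + 2 * inner (z s - zb) (w s) \<le> 0"
      using p m by linarith
    then have "exp (rho s) * (eps s * (r s - c) + 2 * inner (z s - zb) (w s)) \<le> 0"
      by (simp add: mult_nonneg_nonpos)
    then show ?thesis by (simp add: algebra_simps)
  qed
  have \<Psi>mono: "\<Psi> t \<le> \<Psi> t0" if t: "t \<ge> t0" for t
  proof (rule dini_mono[OF t])
    show "continuous_on {t0..t} \<Psi>"
    proof -
      have "continuous_on {t0..t} z" using z_cont by (rule continuous_on_subset) auto
      then show ?thesis unfolding \<Psi>_def[abs_def] r_def[abs_def]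
        by (intro continuous_intros rho_cont)
    qed
    fix s d :: real assume "s \<in> {t0..<t}" "d > 0"
    then show "eventually (\<lambda>h. \<Psi> (s+h) \<le> \<Psi> s + d * h) (at_right 0)"
      by (intro dini_from_deriv[OF \<Psi>d \<Psi>neg]) auto
  qed
  have "r t \<le> c + \<bar>r t0 - c\<bar>" if t: "t \<ge> t0" for t
  proof (cases "r t - c \<le> 0")
    case False
    have "exp (rho t) \<ge> 1" using rho_nonneg[OF t] by simp
    then have "1 * (r t - c) \<le> exp (rho t) * (r t - c)" using False by (intro mult_right_mono) auto
    also have "\<dots> \<le> r t0 - c" using \<Psi>mono[OF t] unfolding \<Psi>_def rho_t0 by simp
    finally show ?thesis by simp
  qed simp
  then have "norm (z t - zb) \<le> sqrt (c + \<bar>r t0 - c\<bar>)" if "t \<ge> t0" for t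
    using that unfolding r_def by (metis norm_eq_sqrt_inner real_sqrt_le_iff)
  then show ?thesis by blast
qed


lemma T_lip: "bounded B \<Longrightarrow> \<exists>K\<ge>0. \<forall>p q. fst p \<in> B \<longrightarrow> fst q \<in> B \<longrightarrow> norm (TT p - TT q) \<le> K * norm (p - q)"
proof -
  assume B: "bounded B"
  obtain L where L: "\<forall>u\<in>B. \<forall>v\<in>B. norm (gradf u - gradf v) \<le> L * norm (u - v)"
    using gradf_lip[OF B] by blast
  obtain KS where KS: "KS \<ge> 0" "\<And>v. norm (Astar v) \<le> KS * norm v" using Astar_bound by blast
  obtain KA where KA: "KA > 0" "\<And>u. norm (A u) \<le> norm u * KA"
    using bounded_linear.pos_bounded[OF A_lin] by blast
  define K where "K = max L 0 + KS + KA"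
  have "norm (TT p - TT q) \<le> K * norm (p - q)" if pq: "fst p \<in> B" "fst q \<in> B" for p q
  proof -
    have "norm (fst (p - q)) \<le> norm (p - q)"
      using norm_fst_le[of "fst (p - q)" "snd (p - q)"] by (simp only: prod.collapse)
    then have nf: "norm (fst p - fst q) \<le> norm (p - q)" by simp
    have "norm (snd (p - q)) \<le> norm (p - q)"
      using norm_snd_le[of "snd (p - q)" "fst (p - q)"] by (simp only: prod.collapse)
    then have ns: "norm (snd p - snd q) \<le> norm (p - q)" by simp
    have eq: "TT p - TT q = (gradf (fst p) - gradf (fst q) + Astar (snd p - snd q), A (fst q - fst p))"
      unfolding TT_def Top_def by (simp add: Astar_diff[symmetric] A_diff[symmetric] algebra_simps)
    have "norm (TT p - TT q) \<le> norm (gradf (fst p) - gradf (fst q) + Astar (snd p - snd q)) + norm (A (fst q - fst p))"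
      unfolding eq by (rule norm_Pair_le)
    also have "\<dots> \<le> norm (gradf (fst p) - gradf (fst q)) + norm (Astar (snd p - snd q)) + norm (A (fst q - fst p))"
      by (simp add: norm_triangle_ineq)
    also have "\<dots> \<le> max L 0 * norm (p - q) + KS * norm (p - q) + KA * norm (p - q)"
    proof -
      have "norm (gradf (fst p) - gradf (fst q)) \<le> L * norm (fst p - fst q)" using L pq by blast
      also have "\<dots> \<le> max L 0 * norm (fst p - fst q)" by (intro mult_right_mono) auto
      also have "\<dots> \<le> max L 0 * norm (p - q)" using nf by (intro mult_left_mono) auto
      finally have 1: "norm (gradf (fst p) - gradf (fst q)) \<le> max L 0 * norm (p - q)" .
      have "norm (Astar (snd p - snd q)) \<le> KS * norm (snd p - snd q)" by (rule KS(2))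
      also have "\<dots> \<le> KS * norm (p - q)" using ns KS(1) by (intro mult_left_mono) auto
      finally have 2: "norm (Astar (snd p - snd q)) \<le> KS * norm (p - q)" .
      have "norm (A (fst q - fst p)) \<le> norm (fst q - fst p) * KA" by (rule KA(2))
      also have "\<dots> \<le> norm (p - q) * KA" using nf KA(1) by (intro mult_right_mono) (auto simp: norm_minus_commute)
      finally have 3: "norm (A (fst q - fst p)) \<le> KA * norm (p - q)" by (simp add: mult.commute)
      from 1 2 3 show ?thesis by linarith
    qed
    also have "\<dots> = K * norm (p - q)" unfolding K_def by (simp add: algebra_simps)
    finally show ?thesis .
  qed
  moreover have "K \<ge> 0" unfolding K_def using KS KA by auto
  ultimately show ?thesis by blast
qed

lemma rq_cont:
  fixes g :: "real \<Rightarrow> 'c::real_normed_vector"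
  assumes "((\<lambda>h. (g (t+h) - g t) /\<^sub>R h) \<longlongrightarrow> D) (at_right 0)"
  shows "((\<lambda>h. g (t+h)) \<longlongrightarrow> g t) (at_right 0)"
proof -
  have "((\<lambda>h. g t + h *\<^sub>R ((g (t+h) - g t) /\<^sub>R h)) \<longlongrightarrow> g t + 0 *\<^sub>R D) (at_right 0)"
    by (intro tendsto_intros assms)
  moreover have "eventually (\<lambda>h. g t + h *\<^sub>R ((g (t+h) - g t) /\<^sub>R h) = g (t+h)) (at_right 0)"
    using eventually_at_right_less[of "0::real"] by eventually_elim simp
  ultimately show ?thesis using tendsto_cong by force
qed

definition "N s = inner (w s) (w s)"
definition "Q s = eps' s * E s * inner (z s) (z s)"
definition "Phi s = E s * N s + Q s"
definition "q s = eps s *\<^sub>R z s"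

lemma Phi_dini:
  assumes t: "t \<ge> tp" and d: "d > 0"
  shows "eventually (\<lambda>h. Phi (t+h) \<le> Phi t + d * h) (at_right 0)"
proof -
  have t0t: "t0 \<le> t" using t tp_ge by simp
  define q0 where "q0 = eps t *\<^sub>R w t + eps' t *\<^sub>R z t"
  have dz: "((\<lambda>h. (z (t+h) - z t) /\<^sub>R h) \<longlongrightarrow> w t) (at_right 0)"
    by (rule rq_lim[OF to_right[OF z_deriv[OF t0t] t0t]])
  have qd: "(q has_vector_derivative q0) (at_right t)"
    unfolding q_def[abs_def] q0_def
    by (rule has_vector_derivative_scaleR[OF to_right_real[OF eps_d1[OF t0t] t0t] to_right[OF z_deriv[OF t0t] t0t]])
  have dq: "((\<lambda>h. (q (t+h) - q t) /\<^sub>R h) \<longlongrightarrow> q0) (at_right 0)"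
    by (rule rq_lim[OF qd])
  have dE: "((\<lambda>h. (E (t+h) - E t) /\<^sub>R h) \<longlongrightarrow> 2 * eps t * E t) (at_right 0)"
    using E_deriv[OF t0t] by (intro rq_lim) (simp add: has_real_derivative_iff_has_vector_derivative)
  define Q1 where "Q1 = eps'' t * E t * inner (z t) (z t) + eps' t * (2 * eps t * E t) * inner (z t) (z t)
      + eps' t * E t * (2 * inner (z t) (w t))"
  have Qd: "(Q has_real_derivative Q1) (at_right t)"
    unfolding Q_def[abs_def] Q1_def
    by (rule derivative_eq_intros to_right_real[OF eps_d2[OF t0t] t0t] E_deriv[OF t0t]
          inner_self_deriv[OF to_right[OF z_deriv[OF t0t] t0t]] refl)+ (simp add: algebra_simps)
  have dQ: "((\<lambda>h. (Q (t+h) - Q t) /\<^sub>R h) \<longlongrightarrow> Q1) (at_right 0)"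
    using Qd by (intro rq_lim) (simp add: has_real_derivative_iff_has_vector_derivative)
  have ev1: "eventually (\<lambda>h. norm ((z (t+h) - z t) /\<^sub>R h) \<le> norm (w t) + 1) (at_right 0)"
    using tendstoD[OF dz zero_less_one]
    by eventually_elim (smt (verit, best) dist_norm norm_triangle_ineq2)
  have ev2: "eventually (\<lambda>h. norm ((q (t+h) - q t) /\<^sub>R h) \<le> norm q0 + 1) (at_right 0)"
    using tendstoD[OF dq zero_less_one]
    by eventually_elim (smt (verit, best) dist_norm norm_triangle_ineq2)
  define B where "B = cball (x t) (norm (w t) + 1)"
  obtain K where K: "K \<ge> 0" "\<And>p p'. fst p \<in> B \<Longrightarrow> fst p' \<in> B \<Longrightarrow> norm (TT p - TT p') \<le> K * norm (p - p')"
    using T_lip[of B] unfolding B_def by auto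
  define K1 where "K1 = K * (norm (w t) + 1)"
  define K2 where "K2 = K1 + norm q0 + 1"
  define G where "G h = E (t+h) * (2 * K1 * norm ((z (t+h) - z t) /\<^sub>R h - w t) - 2 * inner ((q (t+h) - q t) /\<^sub>R h) (w t) + h * K2\<^sup>2)
     + ((E (t+h) - E t) /\<^sub>R h) * N t + (Q (t+h) - Q t) /\<^sub>R h" for h
  have main: "eventually (\<lambda>h. Phi (t+h) - Phi t \<le> h * G h) (at_right 0)"
    using ev1 ev2 eventually_at_right_less[of "0::real"] ev_small[OF zero_less_one]
  proof eventually_elim
    case (elim h)
    then have h: "h > 0" "h < 1" by auto
    define dz where "dz = z (t+h) - z t"
    define dT where "dT = TT (z (t+h)) - TT (z t)"
    define dq where "dq = q (t+h) - q t"
    define dw where "dw = w (t+h) - w t"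
    have dz_eq: "dz = h *\<^sub>R ((z (t+h) - z t) /\<^sub>R h)" unfolding dz_def using h by simp
    have "norm dz = h * norm ((z (t+h) - z t) /\<^sub>R h)" unfolding dz_eq using h by simp
    also have "\<dots> \<le> h * (norm (w t) + 1)" using mult_left_mono[OF elim(1), of h] h by linarith
    finally have dzn: "norm dz \<le> h * (norm (w t) + 1)" .
    have "norm dz \<le> norm (w t) + 1" using dzn h
      by (smt (verit, best) mult_le_cancel_right1 norm_ge_zero)
    moreover have "norm (x (t+h) - x t) \<le> norm dz"
      unfolding dz_def z_def using norm_fst_le[of "x (t+h) - x t" "lam (t+h) - lam t"] by simp
    ultimately have inB: "fst (z (t+h)) \<in> B" "fst (z t) \<in> B"
      unfolding B_def z_def by (auto simp: dist_norm norm_minus_commute)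
    have dTn: "norm dT \<le> K1 * h"
    proof -
      have "norm dT \<le> K * norm dz" unfolding dT_def dz_def by (rule K(2)[OF inB])
      also have "\<dots> \<le> K * (h * (norm (w t) + 1))" using dzn K(1) by (rule mult_left_mono)
      finally show ?thesis unfolding K1_def by (simp add: algebra_simps)
    qed
    have dqn: "norm dq \<le> h * (norm q0 + 1)"
    proof -
      have "dq = h *\<^sub>R ((q (t+h) - q t) /\<^sub>R h)" unfolding dq_def using h by simp
      then have "norm dq = h * norm ((q (t+h) - q t) /\<^sub>R h)" using h by simp
      also have "\<dots> \<le> h * (norm q0 + 1)" using mult_left_mono[OF elim(2), of h] h by linarith
      finally show ?thesis .
    qed
    have dweq: "dw = - dT - dq"
      unfolding dw_def dT_def dq_def q_def using ode[of t] ode[of "t+h"] t0t h by simp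
    have dwn: "norm dw \<le> h * K2"
    proof -
      have "norm dw \<le> norm dT + norm dq" unfolding dweq
        by (metis diff_conv_add_uminus norm_minus_cancel norm_triangle_ineq4)
      then show ?thesis using dTn dqn unfolding K2_def by (simp add: algebra_simps)
    qed
    have Neq: "N (t+h) - N t = - 2 * inner dT (w t) - 2 * inner dq (w t) + inner dw dw"
    proof -
      have "w (t+h) = w t + dw" unfolding dw_def by simp
      then have "N (t+h) = N t + 2 * inner dw (w t) + inner dw dw"
        unfolding N_def by (simp add: inner_add_left inner_add_right inner_commute)
      then show ?thesis unfolding dweq by (simp add: inner_diff_left inner_minus_left)
    qed
    have i1: "- inner dT (w t) \<le> K1 * h * norm ((z (t+h) - z t) /\<^sub>R h - w t)"
    proof -
      have m: "inner dT dz \<ge> 0" unfolding dT_def dz_def by (rule TT_mono)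
      have "- inner dT (w t) = - (1/h) * inner dT dz + inner dT ((z (t+h) - z t) /\<^sub>R h - w t)"
        unfolding dz_def using h by (simp add: inner_diff_right inner_scaleR_right divide_inverse_commute)
      also have "\<dots> \<le> inner dT ((z (t+h) - z t) /\<^sub>R h - w t)"
        using m h by (simp add: mult_nonneg_nonneg)
      also have "\<dots> \<le> norm dT * norm ((z (t+h) - z t) /\<^sub>R h - w t)" by (rule norm_cauchy_schwarz)
      also have "\<dots> \<le> K1 * h * norm ((z (t+h) - z t) /\<^sub>R h - w t)" using dTn by (rule mult_right_mono) simp
      finally show ?thesis .
    qed
    have i2: "inner dq (w t) = h * inner ((q (t+h) - q t) /\<^sub>R h) (w t)"
      unfolding dq_def using h by (simp add: inner_scaleR_left)
    have i3: "inner dw dw \<le> h * (h * K2\<^sup>2)"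
    proof -
      have "inner dw dw = (norm dw)\<^sup>2" by (simp add: power2_norm_eq_inner)
      also have "\<dots> \<le> (h * K2)\<^sup>2" using dwn by (intro power_mono) auto
      finally show ?thesis by (simp add: power2_eq_square algebra_simps)
    qed
    define Bp where "Bp = 2 * K1 * norm ((z (t+h) - z t) /\<^sub>R h - w t) - 2 * inner ((q (t+h) - q t) /\<^sub>R h) (w t) + h * K2\<^sup>2"
    have NB: "N (t+h) - N t \<le> h * Bp"
      unfolding Neq Bp_def using i1 i2 i3 by (simp add: algebra_simps)
    have "Phi (t+h) - Phi t = E (t+h) * (N (t+h) - N t) + (E (t+h) - E t) * N t + (Q (t+h) - Q t)"
      unfolding Phi_def by (simp add: algebra_simps)
    also have "\<dots> \<le> E (t+h) * (h * Bp) + (E (t+h) - E t) * N t + (Q (t+h) - Q t)"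
      using NB E_pos[of "t+h"] by (simp add: mult_left_mono)
    also have "\<dots> = h * G h"
      unfolding G_def Bp_def using h by (simp add: field_simps)
    finally show ?case .
  qed
  define G0 where "G0 = E t * (2 * K1 * 0 - 2 * inner q0 (w t) + 0 * K2\<^sup>2) + (2 * eps t * E t) * N t + Q1"
  have Glim: "(G \<longlongrightarrow> G0) (at_right 0)"
  proof -
    have "((\<lambda>h. E (t+h)) \<longlongrightarrow> E t) (at_right 0)" by (rule rq_cont[OF dE])
    moreover have "((\<lambda>h. norm ((z (t+h) - z t) /\<^sub>R h - w t)) \<longlongrightarrow> 0) (at_right 0)"
      using dz by (simp add: tendsto_norm_zero_iff LIM_zero_iff)
    moreover have "((\<lambda>h::real. h) \<longlongrightarrow> 0) (at_right 0)"
      by (simp add: tendsto_ident_at)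
    ultimately show ?thesis unfolding G_def[abs_def] G0_def
      by (intro tendsto_intros dq dE dQ) auto
  qed
  have "G0 = E t * inner (z t) (z t) * (2 * eps t * eps' t + eps'' t)"
    unfolding G0_def Q1_def q0_def N_def by (simp add: algebra_simps inner_add_left inner_commute)
  also have "\<dots> \<le> 0"
    using cond2[OF t] E_pos[of t] by (intro mult_nonneg_nonpos) auto
  finally have "G0 \<le> 0" .
  from dini_from_G[OF Glim this main d] show ?thesis .
qed


lemma Phi_mono:
  assumes t: "t \<ge> tp"
  shows "Phi t \<le> Phi tp"
proof (rule dini_mono[OF t])
  have sub: "{tp..t} \<subseteq> {t0..}" using tp_ge by auto
  have "continuous_on {tp..t} z" using z_cont sub by (rule continuous_on_subset)
  moreover have "continuous_on {tp..t} w" using w_cont sub by (rule continuous_on_subset)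
  moreover have "continuous_on {tp..t} eps'" using eps'_cont sub by (rule continuous_on_subset)
  moreover have "continuous_on {tp..t} E" using E_cont[of t] by (rule continuous_on_subset) (use tp_ge in auto)
  ultimately show "continuous_on {tp..t} Phi"
    unfolding Phi_def[abs_def] N_def[abs_def] Q_def[abs_def] by (intro continuous_intros)
next
  fix s d :: real assume "s \<in> {tp..<t}" "d > 0"
  then show "eventually (\<lambda>h. Phi (s+h) \<le> Phi s + d * h) (at_right 0)"
    by (intro Phi_dini) auto
qed

lemma N_bound:
  assumes R: "\<And>t. t \<ge> t0 \<Longrightarrow> norm (z t) \<le> Rz"
  shows "\<exists>C\<ge>0. \<forall>t\<ge>tp. N t \<le> C * exp (- 2 * rho t) + Rz\<^sup>2 * (eps t)\<^sup>2"
proof -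
  define C where "C = max (Phi tp) 0"
  have "N t \<le> C * exp (- 2 * rho t) + Rz\<^sup>2 * (eps t)\<^sup>2" if t: "t \<ge> tp" for t
  proof -
    have t0t: "t \<ge> t0" using t tp_ge by simp
    have zz: "inner (z t) (z t) \<le> Rz\<^sup>2"
    proof -
      have "inner (z t) (z t) = (norm (z t))\<^sup>2" by (simp add: power2_norm_eq_inner)
      also have "\<dots> \<le> Rz\<^sup>2" using R[OF t0t] by (intro power_mono) auto
      finally show ?thesis .
    qed
    have "E t * N t = Phi t - Q t" unfolding Phi_def by simp
    also have "\<dots> \<le> Phi tp - Q t" using Phi_mono[OF t] by simp
    also have "- Q t \<le> (eps t)\<^sup>2 * E t * inner (z t) (z t)"
    proof -
      have "- eps' t \<le> (eps t)\<^sup>2" using cond1[OF t] by simp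
      then have "- eps' t * (E t * inner (z t) (z t)) \<le> (eps t)\<^sup>2 * (E t * inner (z t) (z t))"
        using E_pos[of t] by (intro mult_right_mono) auto
      then show ?thesis unfolding Q_def by (simp add: algebra_simps)
    qed
    then have "Phi tp - Q t \<le> C + (eps t)\<^sup>2 * E t * Rz\<^sup>2"
    proof -
      have "(eps t)\<^sup>2 * E t * inner (z t) (z t) \<le> (eps t)\<^sup>2 * E t * Rz\<^sup>2"
        using zz E_pos[of t] by (intro mult_left_mono) auto
      moreover have "Phi tp \<le> C" unfolding C_def by simp
      ultimately show ?thesis using \<open>- Q t \<le> _\<close> by linarith
    qed
    finally have "E t * N t \<le> C + (eps t)\<^sup>2 * E t * Rz\<^sup>2" .
    then have "N t \<le> (C + (eps t)\<^sup>2 * E t * Rz\<^sup>2) / E t"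
      using E_pos[of t] by (simp add: field_simps)
    also have "\<dots> = C * exp (- 2 * rho t) + Rz\<^sup>2 * (eps t)\<^sup>2"
      using E_pos[of t] unfolding E_def by (simp add: field_simps exp_minus)
    finally show ?thesis .
  qed
  moreover have "C \<ge> 0" unfolding C_def by simp
  ultimately show ?thesis by blast
qed

lemma gap:
  "0 \<le> Lag f A b u lb - Lag f A b xb l \<and> Lag f A b u lb - Lag f A b xb l \<le> inner (TT (u, l)) ((u, l) - zb)"
proof -
  have AuA: "A u - b = A (u - xb)" using A_diff[of u xb] xb_opt by simp
  have eq: "Lag f A b u lb - Lag f A b xb l = f u - f xb + inner lb (A u - b)"
    unfolding Lag_def using xb_opt by simp
  have lo: "f xb + inner (gradf xb) (u - xb) \<le> f u" by (rule grad_ineq[OF f_convex f_grad])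
  have "inner (gradf xb) (u - xb) = - inner lb (A u - b)"
  proof -
    have "gradf xb = - Astar lb" using lb_mult by (simp add: eq_neg_iff_add_eq_0)
    then show ?thesis unfolding AuA using A_adj[of "u - xb" lb] by (simp add: inner_commute)
  qed
  with lo have 1: "0 \<le> Lag f A b u lb - Lag f A b xb l" unfolding eq by simp
  have up: "f u + inner (gradf u) (xb - u) \<le> f xb" by (rule grad_ineq[OF f_convex f_grad])
  have "inner (TT (u, l)) ((u, l) - zb) = inner (gradf u) (u - xb) + inner (Astar l) (u - xb) + inner (b - A u) (l - lb)"
    unfolding TT_def Top_def zb_def by (simp add: inner_add_left)
  also have "inner (Astar l) (u - xb) = inner (A u - b) l" unfolding AuA using A_adj[of "u - xb" l] by (simp add: inner_commute)
  also have "inner (b - A u) (l - lb) = - inner (A u - b) l + inner lb (A u - b)"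
    by (simp add: inner_diff_left inner_diff_right inner_commute)
  finally have "inner (TT (u, l)) ((u, l) - zb) = inner (gradf u) (u - xb) + inner lb (A u - b)" by simp
  moreover have "inner (gradf u) (xb - u) = - inner (gradf u) (u - xb)"
    by (simp add: inner_diff_right)
  ultimately have 2: "Lag f A b u lb - Lag f A b xb l \<le> inner (TT (u, l)) ((u, l) - zb)"
    unfolding eq using up by simp
  from 1 2 show ?thesis by blast
qed

lemma sq_sum_le: "(norm (a + c))\<^sup>2 \<le> 2 * (norm a)\<^sup>2 + 2 * (norm c)\<^sup>2"
proof -
  have "norm (a + c) \<le> norm a + norm c" by (rule norm_triangle_ineq)
  then have "(norm (a + c))\<^sup>2 \<le> (norm a + norm c)\<^sup>2" by (intro power_mono) auto
  also have "\<dots> \<le> 2 * (norm a)\<^sup>2 + 2 * (norm c)\<^sup>2"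
    by (smt (verit) sum_squares_bound power2_sum)
  finally show ?thesis .
qed


lemma final:
  shows "(\<lambda>t. (norm ((x' t, lam' t) + eps t *\<^sub>R ((x t, lam t) - (xb, lb))))\<^sup>2)
           \<in> O[at_top](\<lambda>t. exp (- 2 * integral {t0..t} eps) + (eps t)\<^sup>2)
       \<and> (\<lambda>t. eps t * (Lag f A b (x t) lb - Lag f A b xb (lam t)))
           \<in> O[at_top](\<lambda>t. exp (- 2 * integral {t0..t} eps) + (eps t)\<^sup>2)
       \<and> (\<lambda>t. (norm (Top gradf A Astar b (x t) (lam t) - Top gradf A Astar b xb lb))\<^sup>2)
           \<in> O[at_top](\<lambda>t. exp (- 2 * integral {t0..t} eps) + (eps t)\<^sup>2)"
proof -
  obtain R where R: "\<And>t. t \<ge> t0 \<Longrightarrow> norm (z t - zb) \<le> R" using z_bounded by blast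
  have Rnn: "R \<ge> 0" using R[of t0] norm_ge_zero[of "z t0 - zb"] by linarith
  define Rz where "Rz = R + norm zb"
  have Rz: "norm (z t) \<le> Rz" if "t \<ge> t0" for t
  proof -
    have "norm (z t) \<le> norm (z t - zb) + norm zb" using norm_triangle_ineq2[of "z t" zb] by linarith
    then show ?thesis using R[OF that] unfolding Rz_def by simp
  qed
  obtain C where C: "C \<ge> 0" "\<And>t. t \<ge> tp \<Longrightarrow> N t \<le> C * exp (- 2 * rho t) + Rz\<^sup>2 * (eps t)\<^sup>2"
    using N_bound[OF Rz] by blast
  define g where "g t = exp (- 2 * integral {t0..t} eps) + (eps t)\<^sup>2" for t
  have gpos: "g t > 0" for t unfolding g_def by (simp add: add_pos_nonneg)
  have gn: "norm (g t) = g t" for t using gpos[of t] by simp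
  have eg: "(eps t)\<^sup>2 \<le> g t" for t unfolding g_def by simp
  define K0 where "K0 = C + Rz\<^sup>2"
  have K0: "K0 \<ge> 0" unfolding K0_def using C(1) by simp
  have Nb: "N t \<le> K0 * g t" if t: "t \<ge> tp" for t
  proof -
    have "C * exp (- 2 * rho t) \<le> C * g t" unfolding g_def rho_def using C(1) by (intro mult_left_mono) auto
    moreover have "Rz\<^sup>2 * (eps t)\<^sup>2 \<le> Rz\<^sup>2 * g t" using eg by (intro mult_left_mono) auto
    ultimately show ?thesis using C(2)[OF t] unfolding K0_def by (simp add: algebra_simps)
  qed
  have wn: "(norm (w t))\<^sup>2 = N t" for t unfolding N_def by (simp add: power2_norm_eq_inner)
  define K3 where "K3 = 2 * K0 + 2 * Rz\<^sup>2"
  have TTb: "(norm (TT (z t)))\<^sup>2 \<le> K3 * g t" if t: "t \<ge> tp" for t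
  proof -
    have t0t: "t \<ge> t0" using t tp_ge by simp
    have "TT (z t) = - (w t + eps t *\<^sub>R z t)" using ode[OF t0t] by (simp add: algebra_simps)
    then have "norm (TT (z t)) = norm (w t + eps t *\<^sub>R z t)" by (simp only: norm_minus_cancel)
    then have "(norm (TT (z t)))\<^sup>2 \<le> 2 * (norm (w t))\<^sup>2 + 2 * (norm (eps t *\<^sub>R z t))\<^sup>2"
      using sq_sum_le[of "w t" "eps t *\<^sub>R z t"] by (simp only:)
    also have "(norm (eps t *\<^sub>R z t))\<^sup>2 = (eps t)\<^sup>2 * (norm (z t))\<^sup>2" by (simp add: power_mult_distrib)
    also have "\<dots> \<le> g t * Rz\<^sup>2"
      using eg Rz[OF t0t] gpos[of t] by (intro mult_mono power_mono) (auto intro: less_imp_le)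
    finally show ?thesis using Nb[OF t] wn[of t] unfolding K3_def by (simp add: algebra_simps)
  qed
  define K1 where "K1 = 2 * K0 + 2 * R\<^sup>2"
  have b1: "norm ((norm ((x' t, lam' t) + eps t *\<^sub>R ((x t, lam t) - (xb, lb))))\<^sup>2) \<le> K1 * norm (g t)"
    if t: "t \<ge> tp" for t
  proof -
    have t0t: "t \<ge> t0" using t tp_ge by simp
    have "(norm (w t + eps t *\<^sub>R (z t - zb)))\<^sup>2 \<le> 2 * (norm (w t))\<^sup>2 + 2 * (norm (eps t *\<^sub>R (z t - zb)))\<^sup>2"
      by (rule sq_sum_le)
    also have "(norm (eps t *\<^sub>R (z t - zb)))\<^sup>2 = (eps t)\<^sup>2 * (norm (z t - zb))\<^sup>2" by (simp add: power_mult_distrib)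
    also have "\<dots> \<le> g t * R\<^sup>2"
      using eg R[OF t0t] gpos[of t] by (intro mult_mono power_mono) (auto intro: less_imp_le)
    finally have "(norm (w t + eps t *\<^sub>R (z t - zb)))\<^sup>2 \<le> K1 * g t"
      using Nb[OF t] wn[of t] unfolding K1_def by (simp add: algebra_simps)
    then show ?thesis unfolding w_def z_def zb_def gn by simp
  qed
  define K2 where "K2 = R\<^sup>2 / 2 + K3 / 2"
  have b2: "norm (eps t * (Lag f A b (x t) lb - Lag f A b xb (lam t))) \<le> K2 * norm (g t)"
    if t: "t \<ge> tp" for t
  proof -
    have t0t: "t \<ge> t0" using t tp_ge by simp
    have ep: "eps t > 0" using eps_pos[OF t0t] .
    from gap[of "x t" "lam t"] have g0: "0 \<le> Lag f A b (x t) lb - Lag f A b xb (lam t)"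
      and g1: "Lag f A b (x t) lb - Lag f A b xb (lam t) \<le> inner (TT (z t)) (z t - zb)"
      unfolding z_def by auto
    have "inner (TT (z t)) (z t - zb) \<le> norm (TT (z t)) * R"
      using norm_cauchy_schwarz[of "TT (z t)" "z t - zb"] R[OF t0t]
      by (smt (verit) mult_left_mono norm_ge_zero)
    with g1 have g2: "Lag f A b (x t) lb - Lag f A b xb (lam t) \<le> norm (TT (z t)) * R" by simp
    have "norm (eps t * (Lag f A b (x t) lb - Lag f A b xb (lam t))) = eps t * (Lag f A b (x t) lb - Lag f A b xb (lam t))"
      using ep g0 by simp
    also have "\<dots> \<le> eps t * (norm (TT (z t)) * R)" using g2 ep by (intro mult_left_mono) auto
    also have "\<dots> \<le> ((eps t * R)\<^sup>2 + (norm (TT (z t)))\<^sup>2) / 2"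
      using sum_squares_bound[of "eps t * R" "norm (TT (z t))"] by (simp add: algebra_simps)
    also have "\<dots> \<le> (g t * R\<^sup>2 + K3 * g t) / 2"
    proof -
      have "(eps t * R)\<^sup>2 \<le> g t * R\<^sup>2" using eg[of t] by (simp add: power_mult_distrib mult_right_mono)
      then show ?thesis using TTb[OF t] by simp
    qed
    also have "\<dots> = K2 * norm (g t)" unfolding K2_def gn by (simp add: algebra_simps)
    finally show ?thesis .
  qed
  have b3: "norm ((norm (Top gradf A Astar b (x t) (lam t) - Top gradf A Astar b xb lb))\<^sup>2) \<le> K3 * norm (g t)"
    if t: "t \<ge> tp" for t
  proof -
    have "Top gradf A Astar b (x t) (lam t) - Top gradf A Astar b xb lb = TT (z t)"
      using TT_zb unfolding TT_def z_def zb_def by simp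
    then show ?thesis using TTb[OF t] gn by simp
  qed
  have ev: "\<And>P. (\<And>t. t \<ge> tp \<Longrightarrow> P t) \<Longrightarrow> eventually P at_top"
    unfolding eventually_at_top_linorder by blast
  show ?thesis unfolding g_def[symmetric]
    by (intro conjI bigoI[OF ev[OF b1]] bigoI[OF ev[OF b2]] bigoI[OF ev[OF b3]])
qed

end

theorem theorem4p1:
  fixes f :: "'a::{real_inner,complete_space} \<Rightarrow> real"
    and gradf :: "'a \<Rightarrow> 'a"
    and A :: "'a \<Rightarrow> 'b::{real_inner,complete_space}"
    and Astar :: "'b \<Rightarrow> 'a"
    and b :: 'b
    and t0 tp :: real
    and eps eps' eps'' :: "real \<Rightarrow> real"
    and x x' :: "real \<Rightarrow> 'a"
    and lam lam' :: "real \<Rightarrow> 'b"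
    and xb :: 'a and lb :: 'b
  assumes f_convex: "convex_on UNIV f"
    and f_grad: "\<And>u. (f has_derivative (\<lambda>h. inner (gradf u) h)) (at u)"
    and gradf_cont: "continuous_on UNIV gradf"
    and gradf_lip: "\<And>B. bounded B \<Longrightarrow> \<exists>K. \<forall>u\<in>B. \<forall>v\<in>B. norm (gradf u - gradf v) \<le> K * norm (u - v)"
    and A_lin: "bounded_linear A"
    and A_adj: "\<And>u v. inner (A u) v = inner u (Astar v)"
    and t0_nonneg: "t0 \<ge> 0"
    and eps_pos: "\<And>t. t \<ge> t0 \<Longrightarrow> eps t > 0"
    and eps_d1: "\<And>t. t \<ge> t0 \<Longrightarrow> (eps has_real_derivative eps' t) (at t within {t0..})"
    and eps_d2: "\<And>t. t \<ge> t0 \<Longrightarrow> (eps' has_real_derivative eps'' t) (at t within {t0..})"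
    and eps''_cont: "continuous_on {t0..} eps''"
    and eps_lim: "(eps \<longlongrightarrow> 0) at_top"
    and x_deriv: "\<And>t. t \<ge> t0 \<Longrightarrow> (x has_vector_derivative x' t) (at t within {t0..})"
    and lam_deriv: "\<And>t. t \<ge> t0 \<Longrightarrow> (lam has_vector_derivative lam' t) (at t within {t0..})"
    and x'_cont: "continuous_on {t0..} x'"
    and lam'_cont: "continuous_on {t0..} lam'"
    and ode_x: "\<And>t. t \<ge> t0 \<Longrightarrow> x' t + gradf (x t) + Astar (lam t) + eps t *\<^sub>R x t = 0"
    and ode_lam: "\<And>t. t \<ge> t0 \<Longrightarrow> lam' t + (b - A (x t)) + eps t *\<^sub>R lam t = 0"
    and SM_nonempty: "optsol f A b \<times> lagmult f gradf A Astar b \<noteq> {}"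
    and tp_ge: "tp \<ge> t0"
    and cond1: "\<And>t. t \<ge> tp \<Longrightarrow> (eps t)\<^sup>2 + eps' t \<ge> 0"
    and cond2: "\<And>t. t \<ge> tp \<Longrightarrow> 2 * eps t * eps' t + eps'' t \<le> 0"
    and xb_lb: "(xb, lb) \<in> optsol f A b \<times> lagmult f gradf A Astar b"
  shows "(\<lambda>t. (norm ((x' t, lam' t) + eps t *\<^sub>R ((x t, lam t) - (xb, lb))))\<^sup>2)
           \<in> O[at_top](\<lambda>t. exp (- 2 * integral {t0..t} eps) + (eps t)\<^sup>2)
       \<and> (\<lambda>t. eps t * (Lag f A b (x t) lb - Lag f A b xb (lam t)))
           \<in> O[at_top](\<lambda>t. exp (- 2 * integral {t0..t} eps) + (eps t)\<^sup>2)
       \<and> (\<lambda>t. (norm (Top gradf A Astar b (x t) (lam t) - Top gradf A Astar b xb lb))\<^sup>2)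
           \<in> O[at_top](\<lambda>t. exp (- 2 * integral {t0..t} eps) + (eps t)\<^sup>2)"
proof -
  interpret aht f gradf A Astar b t0 tp eps eps' eps'' x x' lam lam' xb lb
    by (rule aht.intro) (fact assms)+
  show ?thesis by (rule final)
qed

end
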